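(* For every positive integer $p$, there is a deterministic $p$-pass streaming algorithm for \textsc{Find-Duplicate} that uses $\widetilde{O}(n^{1/p})$ memory (where $\widetilde{O}$ hides factors polylogarithmic in $n$).
   Context: \textsc{Find-Duplicate}: the input is a stream of $3n/2$ integers, each in $\{1,\dots,n\}$; the goal is to output an integer that appears at least twice in the stream. A $p$-pass streaming algorithm is allowed to read the entire input stream, in order, $p$ times, maintaining only its memory state between and during passes. *)

theory Defs
  imports Complex_Main
begin

text \<open>The memory state is a natural number below 2^s.  The algorithm is given by an
  initial state, a transition function delta i t x (pass number i, current state t,
  current stream symbol x), and an output function applied to the final state.
  The state is carried over unchanged between passes (any between-pass
  processing can be folded into the transition functions of the next pass).\<close>

definition pass_run :: "(nat \<Rightarrow> nat \<Rightarrow> nat) \<Rightarrow> nat list \<Rightarrow> nat \<Rightarrow> nat" where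
  "pass_run step xs t = fold (\<lambda>x u. step u x) xs t"

fun run_passes :: "(nat \<Rightarrow> nat \<Rightarrow> nat \<Rightarrow> nat) \<Rightarrow> nat \<Rightarrow> nat list \<Rightarrow> nat \<Rightarrow> nat" where
  "run_passes \<delta> 0 xs t = t"
| "run_passes \<delta> (Suc i) xs t = pass_run (\<delta> i) xs (run_passes \<delta> i xs t)"

definition streaming_alg :: "nat \<Rightarrow> nat \<Rightarrow> nat \<Rightarrow> (nat \<Rightarrow> nat \<Rightarrow> nat \<Rightarrow> nat) \<Rightarrow> bool" where
  "streaming_alg p s init \<delta> \<longleftrightarrow>
     init < 2 ^ s \<and> (\<forall>i<p. \<forall>t<2 ^ s. \<forall>x. \<delta> i t x < 2 ^ s)"

definition solves_find_duplicate ::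
  "nat \<Rightarrow> nat \<Rightarrow> nat \<Rightarrow> (nat \<Rightarrow> nat \<Rightarrow> nat \<Rightarrow> nat) \<Rightarrow> (nat \<Rightarrow> nat) \<Rightarrow> bool" where
  "solves_find_duplicate n p init \<delta> out \<longleftrightarrow>
     (\<forall>xs. length xs = 3 * n div 2 \<longrightarrow> set xs \<subseteq> {1..n} \<longrightarrow>
        count_list xs (out (run_passes \<delta> p xs init)) \<ge> 2)"

end

theory Submission
  imports Defs
begin

definition enc :: "nat \<Rightarrow> nat \<Rightarrow> (nat \<Rightarrow> nat) \<Rightarrow> nat" where
  "enc M K g = (\<Sum>k<K. (g k mod M) * M ^ k)"

definition dec :: "nat \<Rightarrow> nat \<Rightarrow> nat \<Rightarrow> nat" where
  "dec M t k = t div M ^ k mod M"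

lemma enc_bound:
  assumes "M > 0" shows "enc M K g < M ^ K"
proof (induction K)
  case 0 then show ?case by (simp add: enc_def)
next
  case (Suc K)
  have "g K mod M + 1 \<le> M" using assms by (simp add: Suc_leI)
  then have "(g K mod M + 1) * M ^ K \<le> M * M ^ K" by (rule mult_right_mono) simp
  then show ?case using Suc unfolding enc_def by (simp add: algebra_simps)
qed

lemma enc_shift:
  "enc M (Suc K) g = g 0 mod M + M * enc M K (\<lambda>k. g (Suc k))"
  unfolding enc_def sum.lessThan_Suc_shift by (simp add: sum_distrib_left algebra_simps)

lemma enc_digit:
  assumes "M > 1"
  shows "enc M K g div M ^ j mod M = (if j < K then g j mod M else 0)"
  using assms
proof (induction j arbitrary: g K)
  case 0
  then show ?case
    by (cases K) (auto simp: enc_shift enc_def[of M 0])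
next
  case (Suc j)
  show ?case
  proof (cases K)
    case 0 then show ?thesis by (simp add: enc_def)
  next
    case (Suc K')
    have "enc M K g div M ^ Suc j = (enc M K g div M) div M ^ j"
      by (simp add: div_mult2_eq mult.commute)
    also have "enc M K g div M = enc M K' (\<lambda>k. g (Suc k))"
      using Suc.prems by (simp add: Suc enc_shift)
    finally show ?thesis using Suc.IH[of K' "\<lambda>k. g (Suc k)"] Suc.prems by (simp add: Suc)
  qed
qed

lemma dec_enc:
  assumes "M > 1" shows "dec M (enc M K g) k = (if k < K then g k mod M else 0)"
  using enc_digit[OF assms] by (simp add: dec_def)


definition cnt :: "nat list \<Rightarrow> nat \<Rightarrow> nat \<Rightarrow> nat" where
  "cnt xs a w = length (filter (\<lambda>x. a \<le> x - 1 \<and> x - 1 < a + w) xs)"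

lemma cnt_append: "cnt (ys @ [y]) a w = cnt ys a w + (if a \<le> y - 1 \<and> y - 1 < a + w then 1 else 0)"
  by (simp add: cnt_def)

lemma cnt_split: "cnt xs a (w1 + w2) = cnt xs a w1 + cnt xs (a + w1) w2"
  by (induction xs) (auto simp: cnt_def)

lemma cnt_sum: "cnt xs a (m * w) = (\<Sum>d<m. cnt xs (a + d * w) w)"
proof (induction m)
  case 0 then show ?case by (simp add: cnt_def)
next
  case (Suc m)
  have "cnt xs a (Suc m * w) = cnt xs a (m * w) + cnt xs (a + m * w) w"
    by (simp add: cnt_split[symmetric] add.commute)
  then show ?case using Suc by simp
qed

lemma div_interval:
  fixes l v d w :: nat
  assumes "w > 0" "l \<le> v"
  shows "(l + d * w \<le> v \<and> v < l + d * w + w) = ((v - l) div w = d)"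
proof -
  obtain u where u: "v = l + u" using assms(2) le_Suc_ex by blast
  have "(d * w \<le> u \<and> u < d * w + w) = (u div w = d)"
  proof
    assume "d * w \<le> u \<and> u < d * w + w"
    then show "u div w = d" by (intro div_nat_eqI) (auto simp: mult.commute)
  next
    assume h: "u div w = d"
    have "u div w * w \<le> u" by (rule div_times_less_eq_dividend)
    moreover have "u < u div w * w + w"
      using mod_less_divisor[OF assms(1), of u] div_mult_mod_eq[of u w] by linarith
    ultimately show "d * w \<le> u \<and> u < d * w + w" using h by (simp add: mult.commute)
  qed
  then show ?thesis using u by simp
qed

lemma min_min: "(m::nat) > 0 \<Longrightarrow> min (min x (m - 1) + 1) (m - 1) = min (x + 1) (m - 1)"
  by (auto simp: min_def)

locale fd =
  fixes n p B b :: nat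
  assumes B1: "B \<ge> 1" and p1: "p \<ge> 1" and n2: "n \<ge> 2" and nB: "n \<le> B ^ p"
    and Mb: "2 * n + 2 \<le> 2 ^ b"
begin

abbreviation "M \<equiv> (2::nat) ^ b"
abbreviation "K \<equiv> p * B"

lemma M1: "M > 1"
proof -
  have "(1::nat) < 2 * n + 2" by simp
  then show ?thesis using Mb by (rule less_le_trans)
qed

definition sz :: "nat \<Rightarrow> nat \<Rightarrow> nat" where
  "sz a c = min n c - min n a"

definition W :: "nat \<Rightarrow> nat" where
  "W i = B ^ (p - Suc i)"

lemma W_pos: "W i > 0" using B1 by (simp add: W_def)

definition dig :: "(nat \<Rightarrow> nat) \<Rightarrow> nat \<Rightarrow> nat \<Rightarrow> nat" where
  "dig g i l = (LEAST d. d < B \<and> sz (l + d * W i) (l + d * W i + W i) < g (i * B + d))"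

primrec lo :: "(nat \<Rightarrow> nat) \<Rightarrow> nat \<Rightarrow> nat" where
  "lo g 0 = 0"
| "lo g (Suc i) = lo g i + dig g i (lo g i) * W i"

definition step :: "nat \<Rightarrow> nat \<Rightarrow> (nat \<Rightarrow> nat) \<Rightarrow> (nat \<Rightarrow> nat)" where
  "step i x g = (let l = lo g i; v = x - 1 in
     if l \<le> v \<and> v < l + B * W i
     then g(i * B + (v - l) div W i := min (g (i * B + (v - l) div W i) + 1) (M - 1))
     else g)"

definition delta :: "nat \<Rightarrow> nat \<Rightarrow> nat \<Rightarrow> nat" where
  "delta i t x = enc M K (step i x (dec M t))"

definition out :: "nat \<Rightarrow> nat" where
  "out t = lo (dec M t) p + 1"

definition good :: "(nat \<Rightarrow> nat) \<Rightarrow> bool" where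
  "good g \<longleftrightarrow> (\<forall>k. g k < M) \<and> (\<forall>k\<ge>K. g k = 0)"

lemma lo_cong: "(\<And>k. k < j * B \<Longrightarrow> g k = h k) \<Longrightarrow> lo g j = lo h j"
proof (induction j)
  case 0 then show ?case by simp
next
  case (Suc j)
  have IH: "lo g j = lo h j"
  proof (rule Suc.IH)
    fix k assume "k < j * B" then show "g k = h k" using Suc.prems[of k] by simp
  qed
  have gh: "\<And>d. d < B \<Longrightarrow> g (j * B + d) = h (j * B + d)" using Suc.prems by simp
  have "dig g j l = dig h j l" for l
  proof -
    have "(\<lambda>d. d < B \<and> sz (l + d * W j) (l + d * W j + W j) < g (j * B + d)) =
          (\<lambda>d. d < B \<and> sz (l + d * W j) (l + d * W j + W j) < h (j * B + d))"
      using gh by (intro ext) auto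
    then show ?thesis unfolding dig_def by simp
  qed
  then show ?case using IH by simp
qed

lemma dec_enc_good: "good g \<Longrightarrow> dec M (enc M K g) = g"
  using M1 by (auto simp: dec_enc good_def fun_eq_iff)

lemma step_good:
  assumes "good g" "i < p" shows "good (step i x g)"
proof (cases "lo g i \<le> x - 1 \<and> x - 1 < lo g i + B * W i")
  case True
  define k where "k = i * B + (x - 1 - lo g i) div W i"
  have "x - 1 - lo g i < B * W i" using True by linarith
  then have "(x - 1 - lo g i) div W i < B" using W_pos[of i]
    by (simp add: div_less_iff_less_mult mult.commute)
  then have "k < i * B + B" unfolding k_def by simp
  also have "i * B + B = Suc i * B" by simp
  also have "\<dots> \<le> p * B" using assms(2) by (intro mult_le_mono1) simp
  finally have "k < K" .
  have "step i x g = g(k := min (g k + 1) (M - 1))" using True by (simp add: step_def Let_def k_def)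
  then show ?thesis using assms(1) M1 \<open>k < K\<close> unfolding good_def by auto
next
  case False then have "step i x g = g" unfolding step_def Let_def by auto
  then show ?thesis using assms(1) by simp
qed

lemma pass_lemma:
  assumes "good g" "i < p"
  shows "pass_run (delta i) xs (enc M K g) = enc M K (fold (step i) xs g) \<and> good (fold (step i) xs g)"
  using assms(1)
proof (induction xs arbitrary: g)
  case Nil then show ?case by (simp add: pass_run_def)
next
  case (Cons x xs)
  have "delta i (enc M K g) x = enc M K (step i x g)"
    using Cons.prems by (simp add: delta_def dec_enc_good)
  then show ?case using Cons.IH[OF step_good[OF Cons.prems assms(2)]]
    by (simp add: pass_run_def)
qed

lemma fold_step:
  assumes "good g" "i < p"
  shows "(\<forall>k. (k < i * B \<or> Suc i * B \<le> k) \<longrightarrow> fold (step i) ys g k = g k) \<and>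
    (\<forall>d<B. fold (step i) ys g (i * B + d) = min (g (i * B + d) + cnt ys (lo g i + d * W i) (W i)) (M - 1))"
proof (induction ys rule: rev_induct)
  case Nil
  have "g k \<le> M - 1" for k
  proof -
    have "g k < M" using assms(1) unfolding good_def by blast
    then show ?thesis by linarith
  qed
  then show ?case by (simp add: cnt_def min_def)
next
  case (snoc y ys)
  define h where "h = fold (step i) ys g"
  have h1: "\<And>k. k < i * B \<or> Suc i * B \<le> k \<Longrightarrow> h k = g k" using snoc unfolding h_def by blast
  have h2: "\<And>d. d < B \<Longrightarrow> h (i * B + d) = min (g (i * B + d) + cnt ys (lo g i + d * W i) (W i)) (M - 1)"
    using snoc unfolding h_def by blast
  have lo_eq: "lo h i = lo g i" by (rule lo_cong) (simp add: h1)
  have fe: "fold (step i) (ys @ [y]) g = step i y h" by (simp add: h_def)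
  define l where "l = lo g i"
  show ?case
  proof (cases "l \<le> y - 1 \<and> y - 1 < l + B * W i")
    case True
    define d0 where "d0 = (y - 1 - l) div W i"
    have "y - 1 - l < B * W i" using True by linarith
    then have d0B: "d0 < B" using W_pos[of i] unfolding d0_def
      by (simp add: div_less_iff_less_mult mult.commute)
    have st: "step i y h = h(i * B + d0 := min (h (i * B + d0) + 1) (M - 1))"
      using True by (simp add: step_def Let_def lo_eq l_def d0_def)
    have inint: "(l + d * W i \<le> y - 1 \<and> y - 1 < l + d * W i + W i) = (d0 = d)" for d
      using div_interval[OF W_pos, of l "y - 1" d] True unfolding d0_def by auto
    show ?thesis
    proof (intro conjI allI impI)
      fix k assume "k < i * B \<or> Suc i * B \<le> k"
      moreover have "k \<noteq> i * B + d0" using calculation d0B by auto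
      ultimately show "fold (step i) (ys @ [y]) g k = g k" using fe st h1 by simp
    next
      fix d assume dB: "d < B"
      show "fold (step i) (ys @ [y]) g (i * B + d) =
        min (g (i * B + d) + cnt (ys @ [y]) (lo g i + d * W i) (W i)) (M - 1)"
      proof (cases "d = d0")
        case True
        have "min (min (g (i * B + d) + cnt ys (lo g i + d * W i) (W i)) (M - 1) + 1) (M - 1)
          = min (g (i * B + d) + cnt ys (lo g i + d * W i) (W i) + 1) (M - 1)"
          by (rule min_min) simp
        then show ?thesis using fe st h2[OF dB] inint[of d] True by (simp add: cnt_append l_def)
      next
        case False
        then have "\<not> (l + d * W i \<le> y - 1 \<and> y - 1 < l + d * W i + W i)" using inint[of d] by auto
        then show ?thesis using fe st h2[OF dB] False by (auto simp: cnt_append l_def)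
      qed
    qed
  next
    case False
    have st: "step i y h = h" unfolding step_def Let_def lo_eq using False l_def by auto
    have nint: "\<not> (l + d * W i \<le> y - 1 \<and> y - 1 < l + d * W i + W i)" if "d < B" for d
    proof -
      have "d * W i + W i \<le> B * W i" using that
        by (metis Suc_leI add.commute mult_Suc mult_le_mono1)
      then show ?thesis using False by linarith
    qed
    show ?thesis
    proof (intro conjI allI impI)
      fix k assume "k < i * B \<or> Suc i * B \<le> k"
      then show "fold (step i) (ys @ [y]) g k = g k" using fe st h1 by simp
    next
      fix d assume dB: "d < B"
      show "fold (step i) (ys @ [y]) g (i * B + d) =
        min (g (i * B + d) + cnt (ys @ [y]) (lo g i + d * W i) (W i)) (M - 1)"
        using fe st h2[OF dB] nint[OF dB] by (auto simp: cnt_append l_def)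
    qed
  qed
qed

primrec G :: "nat list \<Rightarrow> nat \<Rightarrow> nat \<Rightarrow> nat" where
  "G xs 0 = (\<lambda>_. 0)"
| "G xs (Suc i) = fold (step i) xs (G xs i)"

lemma G_inv:
  "i \<le> p \<Longrightarrow> good (G xs i) \<and> run_passes delta i xs 0 = enc M K (G xs i) \<and>
    (\<forall>k\<ge>i * B. G xs i k = 0) \<and>
    (\<forall>j<i. \<forall>d<B. G xs i (j * B + d) = min (cnt xs (lo (G xs i) j + d * W j) (W j)) (M - 1))"
proof (induction i)
  case 0
  then show ?case using M1 by (simp add: good_def enc_def)
next
  case (Suc i)
  define g where "g = G xs i"
  define h where "h = G xs (Suc i)"
  have ip: "i < p" using Suc.prems by simp
  have IH: "good g" "run_passes delta i xs 0 = enc M K g" "\<forall>k\<ge>i * B. g k = 0"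
    "\<forall>j<i. \<forall>d<B. g (j * B + d) = min (cnt xs (lo g j + d * W j) (W j)) (M - 1)"
    using Suc unfolding g_def by auto
  have hg: "h = fold (step i) xs g" by (simp add: h_def g_def)
  note F = fold_step[OF IH(1) ip, of xs, folded hg]
  note P = pass_lemma[OF IH(1) ip, of xs, folded hg]
  have "good h" using P by blast
  moreover have "run_passes delta (Suc i) xs 0 = enc M K h" using P IH(2) by simp
  moreover have "\<forall>k\<ge>Suc i * B. h k = 0" using F IH(3) by auto
  moreover have "\<forall>j<Suc i. \<forall>d<B. h (j * B + d) = min (cnt xs (lo h j + d * W j) (W j)) (M - 1)"
  proof (intro allI impI)
    fix j d assume j: "j < Suc i" and d: "d < B"
    have below: "\<And>k. k < i * B \<Longrightarrow> h k = g k" using F by auto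
    show "h (j * B + d) = min (cnt xs (lo h j + d * W j) (W j)) (M - 1)"
    proof (cases "j < i")
      case True
      have "j * B + d < i * B"
      proof -
        have "j * B + d < Suc j * B" using d by simp
        also have "\<dots> \<le> i * B" using True by (intro mult_le_mono1) simp
        finally show ?thesis .
      qed
      moreover have "lo h j = lo g j"
      proof (rule lo_cong)
        fix k assume "k < j * B"
        moreover have "j * B \<le> i * B" using True by (intro mult_le_mono1) simp
        ultimately show "h k = g k" using below by (meson order_less_le_trans)
      qed
      ultimately show ?thesis using below IH(4) True d by simp
    next
      case False
      then have ji: "j = i" using j by simp
      have "lo h i = lo g i" by (rule lo_cong) (simp add: below)
      then show ?thesis using F d IH(3) ji by simp
    qed
  qed
  ultimately show ?case unfolding h_def by blast
qed

lemma sz_add: "x \<le> y \<Longrightarrow> y \<le> z \<Longrightarrow> sz x y + sz y z = sz x z"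
  by (auto simp: sz_def min_def)

lemma sz_sum: "sz a (a + m * w) = (\<Sum>d<m. sz (a + d * w) (a + d * w + w))"
proof (induction m)
  case 0 then show ?case by (simp add: sz_def)
next
  case (Suc m)
  have "sz a (a + Suc m * w) = sz a (a + m * w + w)" by (simp add: algebra_simps)
  also have "\<dots> = sz a (a + m * w) + sz (a + m * w) (a + m * w + w)"
    using sz_add[of a "a + m * w" "a + m * w + w"] by simp
  finally show ?case using Suc by simp
qed

lemma correct:
  assumes len: "length xs = 3 * n div 2" and rng: "set xs \<subseteq> {1..n}"
  shows "count_list xs (out (run_passes delta p xs 0)) \<ge> 2"
proof -
  define g where "g = G xs p"
  have inv: "good g" "run_passes delta p xs 0 = enc M K g"
    "\<forall>j<p. \<forall>d<B. g (j * B + d) = min (cnt xs (lo g j + d * W j) (W j)) (M - 1)"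
    using G_inv[of p xs] unfolding g_def by auto
  have cnt_le: "cnt xs a w < M - 1" for a w
  proof -
    have "cnt xs a w \<le> length xs" unfolding cnt_def by (rule length_filter_le)
    then show ?thesis using len Mb by linarith
  qed
  have rows: "g (j * B + d) = cnt xs (lo g j + d * W j) (W j)" if "j < p" "d < B" for j d
  proof -
    have "cnt xs (lo g j + d * W j) (W j) \<le> M - 1" using cnt_le less_imp_le by blast
    then show ?thesis using inv(3) that by (simp add: min_def)
  qed
  have chain: "j \<le> p \<Longrightarrow> sz (lo g j) (lo g j + B ^ (p - j)) < cnt xs (lo g j) (B ^ (p - j))" for j
  proof (induction j)
    case 0
    have "cnt xs 0 (B ^ p) = length xs"
    proof -
      have "\<forall>x\<in>set xs. 0 \<le> x - 1 \<and> x - 1 < 0 + B ^ p" using rng nB by fastforce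
      then show ?thesis unfolding cnt_def by (simp add: filter_True)
    qed
    moreover have "sz 0 (0 + B ^ p) = n" using nB by (simp add: sz_def)
    ultimately show ?case using len n2 by simp
  next
    case (Suc j)
    then have jp: "j < p" by simp
    define l where "l = lo g j"
    define w where "w = W j"
    have pw: "B ^ (p - j) = B * w" unfolding w_def W_def
      by (metis Suc_diff_Suc jp power_Suc)
    have "sz l (l + B * w) < cnt xs l (B * w)" using Suc pw unfolding l_def by simp
    then have "(\<Sum>d<B. sz (l + d * w) (l + d * w + w)) < (\<Sum>d<B. cnt xs (l + d * w) w)"
      by (simp add: sz_sum cnt_sum)
    then have "\<exists>d<B. sz (l + d * w) (l + d * w + w) < cnt xs (l + d * w) w"
      by (meson not_less sum_mono lessThan_iff)
    then have ex: "\<exists>d. d < B \<and> sz (l + d * w) (l + d * w + w) < g (j * B + d)"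
      using rows[OF jp] unfolding l_def w_def by auto
    define d where "d = dig g j l"
    have dprop: "d < B \<and> sz (l + d * w) (l + d * w + w) < g (j * B + d)"
      unfolding d_def dig_def w_def[symmetric] by (rule LeastI_ex[OF ex])
    have e1: "lo g (Suc j) = l + d * w" by (simp add: l_def d_def w_def)
    have e2: "B ^ (p - Suc j) = w" by (simp add: w_def W_def)
    have e3: "g (j * B + d) = cnt xs (l + d * w) w"
      using rows[OF jp, of d] dprop unfolding l_def w_def by simp
    show ?case unfolding e1 e2 using dprop e3 by simp
  qed
  define a where "a = lo g p"
  have fin: "sz a (a + 1) < cnt xs a 1" using chain[of p] unfolding a_def by simp
  have out_eq: "out (run_passes delta p xs 0) = a + 1"
    using inv(1,2) by (simp add: out_def dec_enc_good a_def)
  have ceq: "count_list xs (a + 1) = cnt xs a 1"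
  proof -
    have "filter ((=) (a + 1)) xs = filter (\<lambda>x. a \<le> x - 1 \<and> x - 1 < a + 1) xs"
      by (rule filter_cong[OF refl]) (use rng in fastforce)
    then show ?thesis unfolding cnt_def count_list_eq_length_filter by simp
  qed
  have an: "a < n"
  proof (rule ccontr)
    assume "\<not> a < n"
    then have "cnt xs a 1 = 0" using rng unfolding cnt_def by (fastforce simp: filter_empty_conv)
    then show False using fin by simp
  qed
  then have "sz a (a + 1) = 1" by (simp add: sz_def)
  then show ?thesis using fin ceq out_eq by simp
qed

end

lemma ln2_ge: "ln (2::real) \<ge> 1 / 2"
proof -
  have e: "exp (1/2::real) * exp (1/2) = exp 1" by (simp flip: exp_add)
  have "exp (1/2::real) \<le> 2"
  proof (rule ccontr)
    assume "\<not> exp (1/2::real) \<le> 2"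
    then have "exp (1/2::real) * exp (1/2) > 2 * 2" by (intro mult_strict_mono) auto
    then show False using e exp_le by simp
  qed
  then show ?thesis using ln_le_cancel_iff[of "exp (1/2)" 2] by simp
qed

lemma bits_bound:
  fixes n :: nat assumes n3: "n \<ge> 3"
  shows "real (nat \<lceil>log 2 (2 * real n + 2)\<rceil>) \<le> 5 * ln (real n)"
proof -
  have lnn: "ln (real n) \<ge> 1"
  proof -
    have "exp 1 \<le> real n" using exp_le n3 by linarith
    then show ?thesis using ln_le_cancel_iff[of "exp 1" "real n"] n3 by simp
  qed
  have sq: "2 * real n + 2 \<le> real n * real n"
  proof -
    have "(3::real) \<le> real n" using n3 by simp
    then have "3 * real n \<le> real n * real n" by (intro mult_right_mono) auto
    then show ?thesis using n3 by linarith
  qed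
  have "ln (2 * real n + 2) \<le> ln (real n * real n)"
    using sq by (subst ln_le_cancel_iff) auto
  also have "\<dots> = 2 * ln (real n)" using n3 by (simp add: ln_mult)
  finally have l1: "ln (2 * real n + 2) \<le> 2 * ln (real n)" .
  have lpos: "ln (2 * real n + 2) \<ge> 0" by simp
  have "log 2 (2 * real n + 2) = ln (2 * real n + 2) / ln 2" by (simp add: log_def)
  also have "\<dots> \<le> ln (2 * real n + 2) / (1/2)"
    using ln2_ge lpos by (intro divide_left_mono) auto
  also have "\<dots> \<le> 4 * ln (real n)" using l1 by simp
  finally have "log 2 (2 * real n + 2) \<le> 4 * ln (real n)" .
  moreover have "real (nat \<lceil>log 2 (2 * real n + 2)\<rceil>) \<le> log 2 (2 * real n + 2) + 1"
  proof -
    have "log 2 (2 * real n + 2) \<ge> 0" by simp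
    then show ?thesis by linarith
  qed
  ultimately show ?thesis using lnn by linarith
qed

theorem mainTheorem2:
  fixes p :: nat
  assumes "p \<ge> 1"
  shows "\<exists>C k n0. \<forall>n \<ge> n0. \<exists>s init \<delta> out.
           real s \<le> C * real n powr (1 / real p) * ln (real n) ^ k
         \<and> streaming_alg p s init \<delta>
         \<and> solves_find_duplicate n p init \<delta> out"
proof -
  have "\<forall>n\<ge>3. \<exists>s init \<delta> out.
           real s \<le> (10 * real p) * real n powr (1 / real p) * ln (real n) ^ 1
         \<and> streaming_alg p s init \<delta>
         \<and> solves_find_duplicate n p init \<delta> out"
  proof (intro allI impI)
    fix n :: nat assume n3: "n \<ge> 3"
    define r where "r = real n powr (1 / real p)"
    define B where "B = nat \<lceil>r\<rceil>"
    define b where "b = nat \<lceil>log 2 (2 * real n + 2)\<rceil>"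
    have r1: "r \<ge> 1" unfolding r_def using n3 by (intro ge_one_powr_ge_zero) auto
    have rB: "r \<le> real B" unfolding B_def by linarith
    have Br: "real B \<le> 2 * r" unfolding B_def using r1 by linarith
    have B1: "B \<ge> 1" using rB r1 by linarith
    have "real n = r ^ p"
    proof -
      have "r ^ p = real n powr (real p * (1 / real p))"
        unfolding r_def using n3 by (subst powr_power) auto
      also have "\<dots> = real n" using assms n3 by simp
      finally show ?thesis by simp
    qed
    also have "r ^ p \<le> real B ^ p" using rB r1 by (intro power_mono) auto
    finally have nB: "n \<le> B ^ p" by (simp flip: of_nat_power)
    have "real (2 * n + 2) = 2 powr (log 2 (2 * real n + 2))" by simp
    also have "\<dots> \<le> 2 powr (real b)" unfolding b_def by (intro powr_mono) linarith+
    also have "\<dots> = real (2 ^ b)" by (simp add: powr_realpow)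
    finally have Mb: "2 * n + 2 \<le> 2 ^ b" by (simp only: of_nat_le_iff)
    interpret fd n p B b
      using B1 assms n3 nB Mb by unfold_locales auto
    have bb: "real b \<le> 5 * ln (real n)" unfolding b_def by (rule bits_bound[OF n3])
    have "real (b * (p * B)) = real b * (real p * real B)" by simp
    also have "\<dots> \<le> (5 * ln (real n)) * (real p * (2 * r))"
      using bb Br by (intro mult_mono) auto
    also have "\<dots> = (10 * real p) * r * ln (real n) ^ 1" by simp
    finally have bound: "real (b * (p * B)) \<le> (10 * real p) * real n powr (1 / real p) * ln (real n) ^ 1"
      unfolding r_def .
    have alg: "streaming_alg p (b * (p * B)) 0 delta"
    proof -
      have "delta i t x < 2 ^ (b * (p * B))" for i t x
      proof -
        have "delta i t x < M ^ K" unfolding delta_def by (rule enc_bound) simp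
        then show ?thesis by (simp add: power_mult)
      qed
      then show ?thesis unfolding streaming_alg_def by simp
    qed
    have sol: "solves_find_duplicate n p 0 delta out"
      unfolding solves_find_duplicate_def using correct by blast
    show "\<exists>s init \<delta> out.
           real s \<le> (10 * real p) * real n powr (1 / real p) * ln (real n) ^ 1
         \<and> streaming_alg p s init \<delta>
         \<and> solves_find_duplicate n p init \<delta> out"
      using bound alg sol by blast
  qed
  then show ?thesis by blast
qed

end
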